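(* Let $q$ be a prime power and let $n_1,n_2$ be coprime odd positive integers, each coprime to $q$. If $x-1$ is the only SCRIM factor of $x^{n_1}-1$ and the only SCRIM factor of $x^{n_2}-1$ in $\mathbb{F}_{q^2}[x]$, then $|\Omega_{q^2,n_1n_2}|=|\Omega_{q^2,n_1}|\,|\Omega_{q^2,n_2}|=1$.
   Context: $\mathbb{F}_{q^2}$ is the finite field with $q^2$ elements. For $\alpha\in\mathbb{F}_{q^2}$ put $\bar\alpha=\alpha^q$, and for $f(x)=\sum_i f_ix^i$ put $\overline{f(x)}=\sum_i \bar f_i x^i$. For $f(x)$ with $f(0)\neq 0$, $f^*(x)=x^{\deg f}f(0)^{-1}f(1/x)$ and $f^\dagger(x)=\overline{f^*(x)}$. A polynomial is SCRIM if it is monic, irreducible over $\mathbb{F}_{q^2}$, has nonzero constant term, and satisfies $f=f^\dagger$. $\Omega_{q^2,n}$ denotes the set of SCRIM polynomials in $\mathbb{F}_{q^2}[x]$ dividing $x^n-1$. *)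

theory Defs
  imports "HOL-Computational_Algebra.Computational_Algebra" "HOL-Library.Cardinality"
begin

text \<open>Conjugation on F_{q^2}: alpha bar = alpha^q, applied coefficientwise.\<close>
definition conj_poly :: "nat \<Rightarrow> 'a::field poly \<Rightarrow> 'a poly" where
  "conj_poly q f = map_poly (\<lambda>a. a ^ q) f"

text \<open>f^*(x) = x^(deg f) f(0)^(-1) f(1/x); note x^(deg f) f(1/x) is reflect_poly f.\<close>
definition recip_poly :: "'a::field poly \<Rightarrow> 'a poly" where
  "recip_poly f = smult (inverse (coeff f 0)) (reflect_poly f)"

definition dagger_poly :: "nat \<Rightarrow> 'a::field poly \<Rightarrow> 'a poly" where
  "dagger_poly q f = conj_poly q (recip_poly f)"

definition SCRIM :: "nat \<Rightarrow> 'a::field poly \<Rightarrow> bool" where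
  "SCRIM q f \<longleftrightarrow> lead_coeff f = 1 \<and> irreducible f \<and> coeff f 0 \<noteq> 0 \<and> f = dagger_poly q f"

definition Omega :: "nat \<Rightarrow> nat \<Rightarrow> 'a::field poly set" where
  "Omega q n = {f. SCRIM q f \<and> f dvd (monom 1 n - 1)}"

definition prime_power :: "nat \<Rightarrow> bool" where
  "prime_power q \<longleftrightarrow> (\<exists>p k. prime p \<and> k > 0 \<and> q = p ^ k)"

end

theory Submission
  imports Defs "HOL-Number_Theory.Cong"
begin

lemma of_nat_mod_CHAR: "(of_nat (n mod CHAR('a)) :: 'a::semiring_1) = of_nat n"
proof -
  have "(of_nat n :: 'a) = of_nat (n mod CHAR('a)) + of_nat (CHAR('a) * (n div CHAR('a)))"
    by (metis mod_mult_div_eq of_nat_add)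
  also have "(of_nat (CHAR('a) * (n div CHAR('a))) :: 'a) = 0"
    by (simp add: of_nat_eq_0_iff_char_dvd)
  finally show ?thesis by simp
qed

lemma my_CHAR_dvd_CARD: "CHAR('a::{field,finite}) dvd CARD('a)"
proof -
  define c where "c = CHAR('a)"
  have cpos: "c > 0" unfolding c_def by (rule finite_imp_CHAR_pos) simp
  define cls where "cls x = (\<lambda>j. x + of_nat j) ` {..<c}" for x :: 'a
  have mem: "x + of_nat j \<in> cls x" for x j
  proof -
    have "x + of_nat j = x + of_nat (j mod c)" by (simp add: c_def of_nat_mod_CHAR)
    thus ?thesis unfolding cls_def using cpos by auto
  qed
  have cls_sub: "z \<in> cls x \<Longrightarrow> cls z \<subseteq> cls x" for z x
  proof
    fix w assume "z \<in> cls x" "w \<in> cls z"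
    then obtain i j where "z = x + of_nat i" "w = z + of_nat j" unfolding cls_def by auto
    hence "w = x + of_nat (i + j)" by (simp add: add.assoc)
    thus "w \<in> cls x" using mem[of x "i+j"] by simp
  qed
  have cls_sym: "z \<in> cls x \<Longrightarrow> x \<in> cls z" for z x
  proof -
    assume "z \<in> cls x"
    then obtain i where i: "i < c" "z = x + of_nat i" unfolding cls_def by auto
    have "z + of_nat (c - i) = x + of_nat (i + (c - i))" using i by (simp add: add.assoc)
    also have "\<dots> = x + of_nat c" using i by simp
    also have "\<dots> = x" by (simp add: c_def)
    finally show ?thesis using mem[of z "c - i"] by simp
  qed
  have card_cls: "card (cls x) = c" for x
  proof -
    have "inj_on (\<lambda>j. x + of_nat j) {..<c}"
    proof (rule inj_onI)
      fix i j assume ij: "i \<in> {..<c}" "j \<in> {..<c}" "x + (of_nat i :: 'a) = x + of_nat j"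
      hence "(of_nat i :: 'a) = of_nat j" by simp
      hence "[i = j] (mod c)" unfolding c_def by (simp add: of_nat_eq_iff_cong_CHAR)
      thus "i = j" using ij by (simp add: cong_def)
    qed
    thus ?thesis unfolding cls_def by (simp add: card_image)
  qed
  have disj: "C1 \<inter> C2 = {}" if "C1 \<in> range cls" "C2 \<in> range cls" "C1 \<noteq> C2" for C1 C2
  proof -
      from that obtain x y where xy: "C1 = cls x" "C2 = cls y" by auto
      show "C1 \<inter> C2 = {}"
      proof (rule ccontr)
        assume "C1 \<inter> C2 \<noteq> {}"
        then obtain z where "z \<in> cls x" "z \<in> cls y" using xy by auto
        hence "cls x = cls y" using cls_sub cls_sym by (meson subset_antisym subset_trans)
        thus False using xy \<open>C1 \<noteq> C2\<close> by simp
      qed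
  qed
  have "c * card (range cls) = card (\<Union>(range cls))"
    by (rule card_partition) (use disj card_cls in auto)
  moreover have "\<Union>(range cls) = UNIV" using mem[of _ 0] by auto
  ultimately show ?thesis unfolding c_def by (metis dvd_triv_left)
qed

lemma char_q:
  assumes "CARD('a::{field,finite}) = q ^ 2" "prime_power q"
  shows "prime CHAR('a) \<and> (\<exists>k. q = CHAR('a) ^ k)"
proof -
  obtain p k where pk: "prime p" "k > 0" "q = p ^ k" using assms(2) unfolding prime_power_def by blast
  have pos: "CHAR('a) > 0" by (rule finite_imp_CHAR_pos) simp
  have pr: "prime CHAR('a)" using pos prime_CHAR_semidom by blast
  have "CHAR('a) dvd p ^ (k*2)" using my_CHAR_dvd_CARD[where 'a='a] assms(1) pk
    by (simp add: power_mult mult.commute)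
  hence "CHAR('a) dvd p" using pr prime_dvd_power by blast
  hence "CHAR('a) = p" using pr pk(1) primes_dvd_imp_eq by blast
  thus ?thesis using pr pk by blast
qed

lemma frob_poly:
  fixes P :: "'a::field poly"
  assumes "prime CHAR('a)" "q = CHAR('a) ^ k"
  shows "(pcompose P (monom 1 m)) ^ q = pcompose (conj_poly q P) (monom 1 (m*q))"
proof (induction P)
  case 0
  have "q > 0" using assms prime_gt_0_nat by simp
  then show ?case by (simp add: conj_poly_def)
next
  case (pCons a P)
  have q0: "q > 0" using assms prime_gt_0_nat by simp
  have fd: "\<And>x y :: 'a poly. (x + y) ^ q = x ^ q + y ^ q"
    by (rule freshmans_dream') (use assms in auto)
  have "(pcompose (pCons a P) (monom 1 m)) ^ q = ([:a:] + monom 1 m * pcompose P (monom 1 m)) ^ q"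
    by (simp add: pcompose_pCons)
  also have "\<dots> = [:a:]^q + (monom 1 m)^q * (pcompose P (monom 1 m)) ^ q"
    by (simp add: fd power_mult_distrib)
  also have "\<dots> = [:a^q:] + monom 1 (m*q) * pcompose (conj_poly q P) (monom 1 (m*q))"
    by (simp add: pCons.IH monom_power poly_const_pow)
  also have "\<dots> = pcompose (conj_poly q (pCons a P)) (monom 1 (m*q))"
    using q0 by (simp add: conj_poly_def map_poly_pCons pcompose_pCons)
  finally show ?case .
qed


abbreviation X :: "nat \<Rightarrow> 'a::comm_ring_1 poly" where "X n \<equiv> monom 1 n"

lemma coeff_pcompose_X:
  fixes g :: "'a::field poly"
  assumes "n > 0"
  shows "coeff (pcompose g (X n)) k = (if n dvd k then coeff g (k div n) else 0)"
proof (induction g arbitrary: k)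
  case 0 then show ?case by simp
next
  case (pCons a g)
  have "coeff (pcompose (pCons a g) (X n)) k = coeff [:a:] k + (if n \<le> k then coeff (pcompose g (X n)) (k - n) else 0)"
    by (simp add: pcompose_pCons coeff_monom_mult)
  also have "\<dots> = (if n dvd k then coeff (pCons a g) (k div n) else 0)"
  proof (cases "n dvd k")
    case True
    then obtain j where j: "k = n * j" by blast
    show ?thesis
    proof (cases j)
      case 0 then show ?thesis using j assms by (simp)
    next
      case (Suc j')
      have kn: "k - n = n * j'" using j Suc by (simp add: algebra_simps)
      have k0: "k \<noteq> 0" "n \<le> k" using j Suc assms by auto
      have "coeff [:a:] k = 0" using k0 by (simp add: coeff_pCons split: nat.splits)
      moreover have "coeff (pcompose g (X n)) (k - n) = coeff g j'" using kn pCons.IH assms by simp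
      moreover have "coeff (pCons a g) (k div n) = coeff g j'" using j Suc assms by simp
      ultimately show ?thesis using True k0 by simp
    qed
  next
    case False
    hence "k \<noteq> 0" by (metis dvd_0_right)
    moreover have "n \<le> k \<Longrightarrow> \<not> n dvd (k - n)" using False by (metis dvd_add_right_iff dvd_refl le_add_diff_inverse)
    ultimately show ?thesis using False pCons.IH by (auto simp: coeff_pCons split: nat.splits)
  qed
  finally show ?case .
qed

lemma degree_pcompose_X:
  fixes g :: "'a::field poly"
  shows "degree (pcompose g (X n)) = degree g * n"
  by (simp add: degree_pcompose degree_monom_eq)

lemma pcompose_monom_X:
  fixes c :: "'a::field"
  assumes "n > 0"
  shows "pcompose (monom c j) (X n) = monom c (j * n)"
proof (rule poly_eqI)
  fix k
  show "coeff (pcompose (Polynomial.monom c j) (X n)) k = coeff (Polynomial.monom c (j * n)) k"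
  proof (cases "n dvd k")
    case True
    then obtain i where "k = n * i" by blast
    then show ?thesis using assms by (auto simp: coeff_pcompose_X coeff_monom)
  next
    case False
    hence "j * n \<noteq> k" by auto
    then show ?thesis using False assms by (simp add: coeff_pcompose_X coeff_monom)
  qed
qed

lemma pcompose_X_X:
  assumes "n > 0"
  shows "pcompose (X m :: 'a::field poly) (X n) = X (m * n)"
  by (rule pcompose_monom_X[OF assms])

lemma conj_smult:
  assumes "q > 0"
  shows "conj_poly q (smult c (P::'a::field poly)) = smult (c^q) (conj_poly q P)"
  by (rule poly_eqI) (use assms in \<open>simp add: conj_poly_def coeff_map_poly power_mult_distrib\<close>)

lemma conj_pcompose_X:
  assumes "q > 0" "n > 0"
  shows "conj_poly q (pcompose (P::'a::field poly) (X n)) = pcompose (conj_poly q P) (X n)"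
  by (rule poly_eqI) (use assms in \<open>simp add: conj_poly_def coeff_map_poly coeff_pcompose_X\<close>)

lemma reflect_pcompose_X:
  assumes "n > 0"
  shows "reflect_poly (pcompose (g::'a::field poly) (X n)) = pcompose (reflect_poly g) (X n)"
proof (rule poly_eqI)
  fix k
  show "coeff (reflect_poly (pcompose g (X n))) k = coeff (pcompose (reflect_poly g) (X n)) k"
  proof (cases "n dvd k")
    case True
    then obtain j where j: "k = n * j" by blast
    have e: "(degree g * n - k) div n = degree g - j"
    proof -
      have "degree g * n - k = n * (degree g - j)" by (simp add: j diff_mult_distrib2 mult.commute)
      thus ?thesis using assms by simp
    qed
    show ?thesis
      using assms e
      by (auto simp: coeff_reflect_poly coeff_pcompose_X degree_pcompose_X j diff_mult_distrib2 mult.commute)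
  next
    case False
    have "k \<le> degree g * n \<Longrightarrow> \<not> n dvd (degree g * n - k)"
      using False by (metis dvd_diff_nat dvd_triv_right diff_diff_cancel)
    then show ?thesis using False assms
      by (auto simp: coeff_reflect_poly coeff_pcompose_X degree_pcompose_X)
  qed
qed

lemma dagger_pcompose_X:
  assumes "q > 0" "n > 0"
  shows "dagger_poly q (pcompose (g::'a::field poly) (X n)) = pcompose (dagger_poly q g) (X n)"
proof -
  have c0: "coeff (pcompose g (X n)) 0 = coeff g 0" using assms coeff_pcompose_X[OF assms(2), of g 0] by simp
  show ?thesis
    unfolding dagger_poly_def recip_poly_def c0 reflect_pcompose_X[OF assms(2)]
    by (simp add: pcompose_smult conj_pcompose_X assms flip: pcompose_smult)
qed

lemma reflect_as_sum:
  fixes G :: "'a::field poly"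
  shows "reflect_poly G = (\<Sum>i\<le>degree G. monom (coeff G i) (degree G - i))"
proof (rule poly_eqI)
  fix k
  have "coeff (\<Sum>i\<le>degree G. monom (coeff G i) (degree G - i)) k
      = (\<Sum>i\<le>degree G. if i = degree G - k \<and> k \<le> degree G then coeff G i else 0)"
    by (simp add: coeff_sum coeff_monom) (rule sum.cong, auto)
  also have "\<dots> = (if k \<le> degree G then coeff G (degree G - k) else 0)"
    by (simp add: sum.delta' )
  finally show "coeff (reflect_poly G) k = coeff (\<Sum>i\<le>degree G. monom (coeff G i) (degree G - i)) k"
    by (simp add: coeff_reflect_poly)
qed


lemma bezout_irr:
  fixes f a :: "'a::field poly"
  assumes irr: "irreducible f" and nd: "\<not> f dvd a"
  shows "\<exists>u v. u * f + v * a = 1"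
proof -
  define S where "S = {h. h \<noteq> 0 \<and> (\<exists>u v. h = u * f + v * a)}"
  have f0: "f \<noteq> 0" using irr by auto
  have "f = 1 * f + 0 * a" by simp
  hence "f \<in> S" unfolding S_def using f0 by blast
  then obtain h where hS: "h \<in> S" and hmin: "\<And>h'. h' \<in> S \<Longrightarrow> degree h \<le> degree h'"
    using ex_has_least_nat[of "\<lambda>h. h \<in> S" f degree] by blast
  from hS obtain u v where h0: "h \<noteq> 0" and huv: "h = u * f + v * a" unfolding S_def by blast
  have hdvd: "h dvd x" if x: "x = f \<or> x = a" for x
  proof (rule ccontr)
    assume nd': "\<not> h dvd x"
    hence m0: "x mod h \<noteq> 0" by (simp add: mod_eq_0_iff_dvd)
    have "x mod h = x - (x div h) * h" by (simp add: minus_div_mult_eq_mod)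
    also have "\<dots> = (if x = f then 1 else 0) * f + (if x = f then 0 else 1) * a - (x div h) * (u * f + v * a)"
      using x huv by auto
    also have "\<dots> = ((if x = f then 1 else 0) - (x div h) * u) * f + ((if x = f then 0 else 1) - (x div h) * v) * a"
      by (simp add: algebra_simps)
    finally have "x mod h \<in> S" unfolding S_def using m0 by blast
    hence "degree h \<le> degree (x mod h)" by (rule hmin)
    moreover have "degree (x mod h) < degree h" using degree_mod_less'[OF h0 m0] .
    ultimately show False by simp
  qed
  have "h dvd f" using hdvd by simp
  then obtain k where k: "f = h * k" by blast
  hence "is_unit h \<or> is_unit k" using irr unfolding irreducible_def by blast
  moreover have "\<not> is_unit k"
  proof
    assume "is_unit k"
    moreover have "h dvd a" using hdvd by simp
    ultimately have "h * k dvd a * k" by (simp add: mult_dvd_mono)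
    hence "f dvd a * k" using k by simp
    hence "f dvd a" using \<open>is_unit k\<close> by (simp add: dvd_mult_unit_iff)
    thus False using nd by simp
  qed
  ultimately have "is_unit h" by blast
  then obtain h' where "1 = h * h'" by (auto elim: dvdE)
  hence "(h' * u) * f + (h' * v) * a = 1" using huv by (simp add: algebra_simps)
  thus ?thesis by blast
qed

lemma irr_dvd_mult:
  fixes f a b :: "'a::field poly"
  assumes "irreducible f" "f dvd a * b"
  shows "f dvd a \<or> f dvd b"
proof (cases "f dvd a")
  case True thus ?thesis by simp
next
  case False
  then obtain u v where uv: "u * f + v * a = 1" using bezout_irr assms(1) by blast
  have "b = (u * f + v * a) * b" using uv by simp
  also have "\<dots> = (u * b) * f + v * (a * b)" by (simp add: algebra_simps)
  finally have "b = (u * b) * f + v * (a * b)" .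
  moreover have "f dvd (u * b) * f + v * (a * b)" using assms(2) by simp
  ultimately show ?thesis by simp
qed

lemma X_dvd_X_mult:
  "(X K - 1 :: 'a::field poly) dvd X (m * K) - 1"
proof -
  have "X (m * K) = (X K :: 'a poly) ^ m" by (simp add: monom_power mult.commute)
  thus ?thesis by (simp add: power_diff_1_eq)
qed

lemma irr_not_dvd_X:
  fixes f :: "'a::field poly"
  assumes "irreducible f" "coeff f 0 \<noteq> 0"
  shows "\<not> f dvd X d"
proof
  assume "f dvd X d"
  have X1: "X d = (X 1 :: 'a poly) ^ d" by (simp add: monom_power)
  have "f dvd X 1"
    using \<open>f dvd X d\<close> unfolding X1
  proof (induction d)
    case 0 then show ?case using assms(1) by (simp add: irreducible_def)
  next
    case (Suc d)
    hence "f dvd X 1 * X 1 ^ d" by simp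
    thus ?case using Suc.IH irr_dvd_mult[OF assms(1), of "X 1" "X 1 ^ d"] by blast
  qed
  then obtain h where h: "X 1 = f * h" by blast
  have "poly (X 1 :: 'a poly) 0 = 0" by (simp add: poly_monom)
  hence "poly f 0 * poly h 0 = 0" using h by (metis poly_mult)
  hence "poly h 0 = 0" using assms(2) by (simp add: poly_0_coeff_0)
  hence "[:0, 1:] dvd h" using poly_eq_0_iff_dvd[of h 0] by simp
  then obtain h' where h': "h = [:0,1:] * h'" by blast
  have "[:0,1:] * 1 = [:0, 1:] * (f * h')" using h h' by (simp add: monom_Suc mult_ac monom_0 one_pCons)
  hence "1 = f * h'" by (subst (asm) mult_left_cancel) auto
  hence "is_unit f" by (metis dvdI)
  thus False using assms(1) by (simp add: irreducible_def)
qed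

lemma key_L:
  fixes f G :: "'a::field poly"
  assumes "prime CHAR('a)" "q = CHAR('a) ^ k"
    and "irreducible f" "coeff f 0 \<noteq> 0" "f dvd G" "f dvd X K - 1" "K > 1"
  shows "f dvd pcompose (dagger_poly q G) (X ((K - 1) * q))"
proof -
  define d where "d = degree G"
  define R where "R = pcompose (reflect_poly G) (X (K - 1))"
  have q0: "q > 0" using assms(1,2) prime_gt_0_nat by simp
  have "R = (\<Sum>i\<le>d. Polynomial.monom (coeff G i) ((d - i) * (K - 1)))"
    unfolding R_def d_def
    by (subst reflect_as_sum) (use assms(7) in \<open>simp add: pcompose_sum pcompose_monom_X\<close>)
  hence "X d * R = (\<Sum>i\<le>d. Polynomial.monom (coeff G i) (i + (d - i) * K))"
  proof -
    assume R: "R = (\<Sum>i\<le>d. Polynomial.monom (coeff G i) ((d - i) * (K - 1)))"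
    have "X d * R = (\<Sum>i\<le>d. Polynomial.monom (coeff G i) (d + (d - i) * (K - 1)))"
      by (simp add: R sum_distrib_left mult_monom)
    also have "\<dots> = (\<Sum>i\<le>d. Polynomial.monom (coeff G i) (i + (d - i) * K))"
    proof (rule sum.cong)
      fix i assume "i \<in> {..d}"
      hence "i \<le> d" by simp
      then obtain e where e: "d = i + e" using le_Suc_ex by blast
      obtain K' where K': "K = Suc K'" using assms(7) by (cases K) auto
      have "d + (d - i) * (K - 1) = i + (d - i) * K" unfolding e K' by simp
      thus "Polynomial.monom (coeff G i) (d + (d - i) * (K - 1)) = Polynomial.monom (coeff G i) (i + (d - i) * K)"
        by simp
    qed simp
    finally show ?thesis .
  qed
  hence "X d * R - G = (\<Sum>i\<le>d. Polynomial.monom (coeff G i) (i + (d - i) * K)) - (\<Sum>i\<le>d. Polynomial.monom (coeff G i) i)"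
    using poly_as_sum_of_monoms[of G] unfolding d_def by simp
  also have "\<dots> = (\<Sum>i\<le>d. Polynomial.monom (coeff G i) (i + (d - i) * K) - Polynomial.monom (coeff G i) i)"
    by (simp add: sum_subtractf)
  also have "\<dots> = (\<Sum>i\<le>d. Polynomial.monom (coeff G i) i * (X ((d - i) * K) - 1))"
    by (rule sum.cong) (simp_all add: right_diff_distrib mult_monom)
  finally have XRG: "X d * R - G = (\<Sum>i\<le>d. Polynomial.monom (coeff G i) i * (X ((d - i) * K) - 1))" .
  have "(X K - 1) dvd (\<Sum>i\<le>d. Polynomial.monom (coeff G i) i * (X ((d - i) * K) - 1))"
    by (intro dvd_sum dvd_mult X_dvd_X_mult)
  hence "f dvd X d * R - G" unfolding XRG using assms(6) by (rule dvd_trans[rotated])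
  hence "f dvd (X d * R - G) + G" using assms(5) by (rule dvd_add)
  hence "f dvd X d * R" by simp
  hence "f dvd R" using irr_not_dvd_X[OF assms(3,4)] irr_dvd_mult[OF assms(3)] by blast
  moreover have "R dvd R ^ q" using q0 by (cases q) auto
  ultimately have "f dvd R ^ q" by (rule dvd_trans)
  hence "f dvd pcompose (conj_poly q (reflect_poly G)) (X ((K - 1) * q))"
    using frob_poly[OF assms(1,2), of "reflect_poly G" "K - 1"] unfolding R_def by simp
  hence "f dvd smult ((inverse (coeff G 0)) ^ q) (pcompose (conj_poly q (reflect_poly G)) (X ((K - 1) * q)))"
    by (rule dvd_smult)
  thus ?thesis
    unfolding dagger_poly_def recip_poly_def by (simp add: conj_smult q0 pcompose_smult)
qed


lemma pcompose_dvd: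
  fixes a b r :: "'a::field poly"
  assumes "a dvd b" shows "pcompose a r dvd pcompose b r"
proof -
  from assms obtain c where "b = a * c" by blast
  thus ?thesis by (simp add: pcompose_mult)
qed

lemma factor_exists:
  fixes f P :: "'a::field poly"
  assumes "irreducible f" "P \<noteq> 0" "f dvd pcompose P (X n)"
  shows "\<exists>g. irreducible g \<and> lead_coeff g = 1 \<and> g dvd P \<and> f dvd pcompose g (X n)"
  using assms(2,3)
proof (induction "degree P" arbitrary: P rule: less_induct)
  case less
  show ?case
  proof (cases "degree P = 0")
    case True
    then obtain c where c: "P = [:c:]" by (metis degree_eq_zeroE)
    hence "c \<noteq> 0" using less.prems by simp
    hence "is_unit P" using c by (simp add: is_unit_const_poly_iff dvd_field_iff)
    moreover have "f dvd P" using less.prems c by simp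
    ultimately have "is_unit f" by (rule dvd_unit_imp_unit[rotated])
    thus ?thesis using assms(1) by (simp add: irreducible_def)
  next
    case False
    hence nu: "\<not> is_unit P" using less.prems by (simp add: is_unit_iff_degree)
    show ?thesis
    proof (cases "irreducible P")
      case True
      define g where "g = smult (inverse (lead_coeff P)) P"
      have l0: "lead_coeff P \<noteq> 0" using less.prems by simp
      have gP: "P = smult (lead_coeff P) g" unfolding g_def using l0 by simp
      have "g = [:inverse (lead_coeff P):] * P" unfolding g_def by simp
      moreover have "is_unit [:inverse (lead_coeff P):]" using l0 by (simp add: is_unit_const_poly_iff dvd_field_iff)
      ultimately have "irreducible g" using True irreducible_mult_unit_left by metis
      moreover have "lead_coeff g = 1" unfolding g_def using l0 by simp
      moreover have "g dvd P" using gP by (metis dvd_triv_right mult_smult_left mult_1 smult_one)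
      moreover have "f dvd pcompose g (X n)"
        unfolding g_def pcompose_smult using less.prems(2) by (rule dvd_smult)
      ultimately show ?thesis by blast
    next
      case False
      then obtain a b where ab: "P = a * b" "\<not> is_unit a" "\<not> is_unit b"
        using less.prems nu unfolding irreducible_def by blast
      have a0: "a \<noteq> 0" "b \<noteq> 0" using ab less.prems by auto
      have "degree a \<noteq> 0" "degree b \<noteq> 0" using ab a0 is_unit_iff_degree by blast+
      moreover have "degree P = degree a + degree b" using ab a0 by (simp add: degree_mult_eq)
      ultimately have lt: "degree a < degree P" "degree b < degree P" by auto
      have "f dvd pcompose a (X n) * pcompose b (X n)" using less.prems ab by (simp add: pcompose_mult)
      hence "f dvd pcompose a (X n) \<or> f dvd pcompose b (X n)" by (rule irr_dvd_mult[OF assms(1)])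
      thus ?thesis
      proof
        assume "f dvd pcompose a (X n)"
        from less.hyps[OF lt(1) a0(1) this] show ?thesis using ab by (meson dvd_mult2)
      next
        assume "f dvd pcompose b (X n)"
        from less.hyps[OF lt(2) a0(2) this] show ?thesis using ab by (meson dvd_mult)
      qed
    qed
  qed
qed

lemma dagger_props:
  fixes g :: "'a::field poly"
  assumes "coeff g 0 \<noteq> 0" "q > 0"
  shows "degree (dagger_poly q g) = degree g \<and> lead_coeff (dagger_poly q g) = 1"
proof -
  define r where "r = smult (inverse (coeff g 0)) (reflect_poly g)"
  have dr: "degree r = degree g" unfolding r_def using assms by simp
  have lr: "lead_coeff r = 1" unfolding r_def using assms
    by (simp add: coeff_reflect_poly)
  have "degree (conj_poly q r) = degree r" unfolding conj_poly_def
    by (rule degree_map_poly) (use assms in simp)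
  moreover have "lead_coeff (conj_poly q r) = 1"
    unfolding conj_poly_def using assms lr
    by (subst lead_coeff_map_poly_nz) auto
  ultimately show ?thesis unfolding dagger_poly_def recip_poly_def r_def[symmetric] using dr by simp
qed

lemma monic_dvd_eq:
  fixes g h :: "'a::field poly"
  assumes "g dvd h" "degree h = degree g" "lead_coeff g = 1" "lead_coeff h = 1"
  shows "h = g"
proof -
  obtain k where k: "h = g * k" using assms(1) by blast
  have h0: "h \<noteq> 0" using assms(4) by auto
  hence g0: "g \<noteq> 0" "k \<noteq> 0" using k by auto
  have "degree k = 0" using k g0 assms(2) by (simp add: degree_mult_eq)
  then obtain c where c: "k = [:c:]" by (metis degree_eq_zeroE)
  have "lead_coeff h = lead_coeff g * c" using k c by (simp add: lead_coeff_mult)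
  hence "c = 1" using assms by simp
  thus ?thesis using k c by simp
qed


lemma const_m1: "1 + [:-1:] = (0 :: 'a::comm_ring_1 poly)"
  by (simp add: one_pCons)

lemma main_unique:
  fixes f :: "'a::{field,finite} poly"
  assumes card: "CARD('a) = q ^ 2" and pp: "prime_power q"
    and n1: "n1 > 0" and n2: "n2 > 0" and N1: "n1 * n2 > 1"
    and O1: "(Omega q n1 :: 'a poly set) = {[:-1, 1:]}"
    and O2: "(Omega q n2 :: 'a poly set) = {[:-1, 1:]}"
    and fO: "f \<in> Omega q (n1 * n2)"
  shows "f = [:-1, 1:]"
proof -
  define N where "N = n1 * n2"
  obtain k where pr: "prime CHAR('a)" and qk: "q = CHAR('a) ^ k" using char_q[OF card pp] by blast
  have q0: "q > 0" using pr qk prime_gt_0_nat by simp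
  have N1': "N > 1" using N1 N_def by simp
  define M where "M = (N - 1) * q"
  have M0: "M > 0" using N1' q0 M_def by simp
  from fO have fS: "SCRIM q f" and fd: "f dvd X N - 1" unfolding Omega_def N_def by auto
  from fS have fl: "lead_coeff f = 1" and firr: "irreducible f" and f0: "coeff f 0 \<noteq> 0"
    and fdag: "f = dagger_poly q f" unfolding SCRIM_def by auto
  define P :: "'a poly" where "P = X n1 - 1"
  have P0: "poly P 0 \<noteq> 0" unfolding P_def using n1 by (simp add: poly_monom power_0_left)
  hence Pn0: "P \<noteq> 0" by auto
  have "pcompose P (X n2) = X N - 1" unfolding P_def N_def
    using n2 by (simp add: pcompose_diff pcompose_X_X pcompose_1)
  hence "f dvd pcompose P (X n2)" using fd by simp
  then obtain g where girr: "irreducible g" and gl: "lead_coeff g = 1" and gP: "g dvd P"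
    and fg: "f dvd pcompose g (X n2)"
    using factor_exists[OF firr Pn0] by blast
  have g0: "coeff g 0 \<noteq> 0"
  proof
    assume "coeff g 0 = 0"
    hence "poly g 0 = 0" by (simp add: poly_0_coeff_0)
    moreover from gP obtain h where "P = g * h" by blast
    ultimately have "poly P 0 = 0" by simp
    thus False using P0 by simp
  qed
  have "f dvd pcompose (dagger_poly q f) (X M)"
    unfolding M_def by (rule key_L[OF pr qk firr f0 dvd_refl fd N1'])
  hence fM: "f dvd pcompose f (X M)" using fdag by simp
  have "pcompose f (X M) dvd pcompose (pcompose g (X n2)) (X M)"
    by (rule pcompose_dvd[OF fg])
  also have "pcompose (pcompose g (X n2)) (X M) = pcompose g (X (n2 * M))"
    using M0 by (simp add: pcompose_X_X flip: pcompose_assoc)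
  finally have A1: "f dvd pcompose g (X (n2 * M))" using fM by (rule dvd_trans[rotated])
  have "f dvd pcompose (dagger_poly q (pcompose g (X n2))) (X M)"
    unfolding M_def by (rule key_L[OF pr qk firr f0 fg fd N1'])
  also have "pcompose (dagger_poly q (pcompose g (X n2))) (X M) = pcompose (dagger_poly q g) (X (n2 * M))"
    using M0 n2 q0 by (simp add: dagger_pcompose_X pcompose_X_X flip: pcompose_assoc)
  finally have A2: "f dvd pcompose (dagger_poly q g) (X (n2 * M))" .
  have gdd: "g dvd dagger_poly q g"
  proof (rule ccontr)
    assume "\<not> g dvd dagger_poly q g"
    then obtain u v where uv: "u * g + v * dagger_poly q g = 1" using bezout_irr[OF girr] by blast
    have "pcompose (u * g + v * dagger_poly q g) (X (n2 * M)) = 1" using uv by (simp add: pcompose_1)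
    hence "pcompose u (X (n2 * M)) * pcompose g (X (n2 * M)) + pcompose v (X (n2 * M)) * pcompose (dagger_poly q g) (X (n2 * M)) = 1"
      by (simp add: pcompose_add pcompose_mult)
    moreover have "f dvd pcompose u (X (n2 * M)) * pcompose g (X (n2 * M)) + pcompose v (X (n2 * M)) * pcompose (dagger_poly q g) (X (n2 * M))"
      using A1 A2 by simp
    ultimately have "is_unit f" by simp
    thus False using firr by (simp add: irreducible_def)
  qed
  have "dagger_poly q g = g"
    by (rule monic_dvd_eq[OF gdd]) (use dagger_props[OF g0 q0] gl in auto)
  hence "SCRIM q g" unfolding SCRIM_def using gl girr g0 by simp
  hence "g \<in> Omega q n1" unfolding Omega_def using gP P_def by simp
  hence gL: "g = [:-1, 1:]" using O1 by simp
  have "pcompose g (X n2) = X n2 - 1" unfolding gL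
    using const_m1 by (simp add: pcompose_pCons monom_0 algebra_simps)
  hence "f dvd X n2 - 1" using fg by simp
  hence "f \<in> Omega q n2" unfolding Omega_def using fS by simp
  thus ?thesis using O2 by simp
qed

theorem corollary2p10:
  fixes q n1 n2 :: nat
  assumes "CARD('a::{field,finite}) = q ^ 2"
    and "prime_power q"
    and "coprime n1 n2" and "odd n1" and "odd n2" and "n1 > 0" and "n2 > 0"
    and "coprime n1 q" and "coprime n2 q"
    and "(Omega q n1 :: 'a poly set) = {[:-1, 1:]}"
    and "(Omega q n2 :: 'a poly set) = {[:-1, 1:]}"
  shows "card (Omega q (n1 * n2) :: 'a poly set)
           = card (Omega q n1 :: 'a poly set) * card (Omega q n2 :: 'a poly set)
         \<and> card (Omega q n1 :: 'a poly set) * card (Omega q n2 :: 'a poly set) = 1"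
proof -
  have "(Omega q (n1 * n2) :: 'a poly set) = {[:-1, 1:]}"
  proof (cases "n1 * n2 = 1")
    case True
    hence "n1 = 1" by simp
    thus ?thesis using True assms(10) by simp
  next
    case False
    have "n1 * n2 \<noteq> 0" using assms(6,7) by simp
    hence N1: "n1 * n2 > 1" using False by linarith
    have LS: "SCRIM q ([:-1, 1:] :: 'a poly)" using assms(10) unfolding Omega_def by auto
    have p1: "poly (X (n1 * n2) - 1 :: 'a poly) 1 = 0" by (simp add: poly_monom)
    have "[:-1, 1:] dvd (X (n1 * n2) - 1 :: 'a poly)"
      using poly_eq_0_iff_dvd[of "X (n1 * n2) - 1 :: 'a poly" 1] p1 by simp
    hence "[:-1, 1:] \<in> (Omega q (n1 * n2) :: 'a poly set)" unfolding Omega_def using LS by simp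
    moreover have "f = [:-1, 1:]" if "f \<in> (Omega q (n1 * n2) :: 'a poly set)" for f
      by (rule main_unique[OF assms(1,2,6,7) N1 assms(10,11) that])
    ultimately show ?thesis by blast
  qed
  thus ?thesis using assms(10,11) by simp
qed

end
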